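(* Let $X$ be a finite set and let $c$ be a choice correspondence on $X$ that admits a minimal compromise representation. Then $c$ satisfies axiom $\gamma$: for all menus $A,B$, if $x\in c(A)\cap c(B)$ then $x\in c(A\cup B)$; and $c$ satisfies No Binary Cycles: for all $x,y,z\in X$, if $x\in c(\{x,y\})$ and $y\in c(\{y,z\})$, then $x\in c(\{x,z\})$.
   Context: A menu is a nonempty subset of $X$. A choice correspondence is a map $c$ assigning to each menu $A$ a nonempty subset $c(A)\subseteq A$. A weak order is a complete and transitive binary relation on $X$; a linear order is an antisymmetric weak order. For a weak order $R$ and menu $A$, $\max(A,R)=\{x\in A: xRy \text{ for all } y\in A\}$. For a linear order $L$, $\min(A,L)$ denotes the unique $x\in A$ with $yLx$ for all $y\in A$. A choice correspondence $c$ admits a minimal compromise representation if there exist a weak order $R$ and a linear order $L$ on $X$ such that for every menu $A$: $c(A)=\max(A,R)$ if $\max(A,R)$ is a singleton, and $c(A)=\max(A,R)\setminus\{\min(\max(A,R),L)\}$ otherwise. *)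

theory Defs
  imports Main
begin

definition menu :: "'a set \<Rightarrow> 'a set \<Rightarrow> bool" where
  "menu X A \<longleftrightarrow> A \<subseteq> X \<and> A \<noteq> {}"

definition choice_correspondence :: "'a set \<Rightarrow> ('a set \<Rightarrow> 'a set) \<Rightarrow> bool" where
  "choice_correspondence X c \<longleftrightarrow>
     (\<forall>A. menu X A \<longrightarrow> c A \<subseteq> A \<and> c A \<noteq> {})"

definition weak_order_on :: "'a set \<Rightarrow> 'a rel \<Rightarrow> bool" where
  "weak_order_on X R \<longleftrightarrow> R \<subseteq> X \<times> X \<and>
     (\<forall>x\<in>X. \<forall>y\<in>X. (x, y) \<in> R \<or> (y, x) \<in> R) \<and> trans R"

definition linear_order_on' :: "'a set \<Rightarrow> 'a rel \<Rightarrow> bool" where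
  "linear_order_on' X L \<longleftrightarrow> weak_order_on X L \<and> antisym L"

definition maxR :: "'a set \<Rightarrow> 'a rel \<Rightarrow> 'a set" where
  "maxR A R = {x \<in> A. \<forall>y\<in>A. (x, y) \<in> R}"

definition minL :: "'a set \<Rightarrow> 'a rel \<Rightarrow> 'a" where
  "minL A L = (THE x. x \<in> A \<and> (\<forall>y\<in>A. (y, x) \<in> L))"

definition minimal_compromise_rep :: "'a set \<Rightarrow> ('a set \<Rightarrow> 'a set) \<Rightarrow> 'a rel \<Rightarrow> 'a rel \<Rightarrow> bool" where
  "minimal_compromise_rep X c R L \<longleftrightarrow> weak_order_on X R \<and> linear_order_on' X L \<and>
     (\<forall>A. menu X A \<longrightarrow>
        c A = (if card (maxR A R) = 1 then maxR A R
               else maxR A R - {minL (maxR A R) L}))"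

definition admits_mcr :: "'a set \<Rightarrow> ('a set \<Rightarrow> 'a set) \<Rightarrow> bool" where
  "admits_mcr X c \<longleftrightarrow> (\<exists>R L. minimal_compromise_rep X c R L)"

end

theory Submission
  imports Defs
begin

lemma minL_eq:
  assumes "linear_order_on' X L" "x \<in> M" "\<forall>y\<in>M. (y, x) \<in> L"
  shows "minL M L = x"
  unfolding minL_def
proof (rule the_equality)
  show "x \<in> M \<and> (\<forall>y\<in>M. (y, x) \<in> L)" using assms by auto
next
  fix z assume "z \<in> M \<and> (\<forall>y\<in>M. (y, z) \<in> L)"
  then show "z = x" using assms unfolding linear_order_on'_def antisym_def by blast
qed

lemma L_min_exists:
  assumes lo: "linear_order_on' X L" and "finite M" "M \<noteq> {}" "M \<subseteq> X"
  shows "\<exists>m\<in>M. \<forall>y\<in>M. (y, m) \<in> L"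
  using assms(2,3,4)
proof (induction M rule: finite_ne_induct)
  case (singleton x)
  then show ?case using lo unfolding linear_order_on'_def weak_order_on_def by blast
next
  case (insert x F)
  then obtain m where m: "m \<in> F" "\<forall>y\<in>F. (y, m) \<in> L" by auto
  have tot: "(x, m) \<in> L \<or> (m, x) \<in> L" "(x,x) \<in> L"
    using lo insert m unfolding linear_order_on'_def weak_order_on_def by auto
  have tr: "trans L" using lo unfolding linear_order_on'_def weak_order_on_def by auto
  show ?case
  proof (cases "(x, m) \<in> L")
    case True then show ?thesis using m by auto
  next
    case False
    then have "(m, x) \<in> L" using tot by auto
    then show ?thesis using m tot tr unfolding trans_def by blast
  qed
qed

lemma minL_iff:
  assumes lo: "linear_order_on' X L" and "finite M" "M \<subseteq> X" "x \<in> M"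
  shows "minL M L = x \<longleftrightarrow> (\<forall>y\<in>M. (y, x) \<in> L)"
proof
  assume h: "minL M L = x"
  obtain m where m: "m \<in> M" "\<forall>y\<in>M. (y, m) \<in> L" using L_min_exists[OF lo] assms by blast
  then have "minL M L = m" using minL_eq[OF lo] by blast
  then show "\<forall>y\<in>M. (y, x) \<in> L" using h m by simp
next
  assume "\<forall>y\<in>M. (y, x) \<in> L"
  then show "minL M L = x" using minL_eq[OF lo] assms by blast
qed

theorem lemma2:
  fixes X :: "'a set" and c :: "'a set \<Rightarrow> 'a set"
  assumes "finite X"
    and "choice_correspondence X c"
    and "admits_mcr X c"
  shows "(\<forall>A B x. menu X A \<longrightarrow> menu X B \<longrightarrow> x \<in> c A \<inter> c B \<longrightarrow> x \<in> c (A \<union> B))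
       \<and> (\<forall>x\<in>X. \<forall>y\<in>X. \<forall>z\<in>X. x \<in> c {x, y} \<longrightarrow> y \<in> c {y, z} \<longrightarrow> x \<in> c {x, z})"
proof -
  obtain R L where rep: "minimal_compromise_rep X c R L" using assms(3) admits_mcr_def by blast
  have wR: "weak_order_on X R" and lo: "linear_order_on' X L"
    and cA: "\<And>A. menu X A \<Longrightarrow> c A = (if card (maxR A R) = 1 then maxR A R
               else maxR A R - {minL (maxR A R) L})"
    using rep unfolding minimal_compromise_rep_def by auto
  have trR: "trans R" and RX: "R \<subseteq> X \<times> X" and totR: "\<And>x y. x \<in> X \<Longrightarrow> y \<in> X \<Longrightarrow> (x,y) \<in> R \<or> (y,x) \<in> R"
    using wR unfolding weak_order_on_def by auto
  have trL: "trans L" and totL: "\<And>x y. x \<in> X \<Longrightarrow> y \<in> X \<Longrightarrow> (x,y) \<in> L \<or> (y,x) \<in> L"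
    and asL: "antisym L"
    using lo unfolding linear_order_on'_def weak_order_on_def by auto
  have memc: "x \<in> c A \<longleftrightarrow> x \<in> maxR A R \<and> (card (maxR A R) = 1 \<or> \<not> (\<forall>y\<in>maxR A R. (y, x) \<in> L))"
    if "menu X A" for A x
  proof -
    have fin: "finite (maxR A R)" "maxR A R \<subseteq> X"
      using that assms(1) unfolding menu_def maxR_def by (auto intro: finite_subset)
    show ?thesis using cA[OF that] minL_iff[OF lo fin] by auto
  qed
  have g: "x \<in> c (A \<union> B)" if A: "menu X A" and B: "menu X B" and xA: "x \<in> c A" and xB: "x \<in> c B" for A B x
  proof -
    have AB: "menu X (A \<union> B)" using A B unfolding menu_def by auto
    have xmA: "x \<in> maxR A R" and xmB: "x \<in> maxR B R" using memc A B xA xB by auto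
    define M where "M = maxR (A \<union> B) R"
    have xM: "x \<in> M" using xmA xmB unfolding M_def maxR_def by auto
    have MA: "M = maxR A R \<union> maxR B R"
    proof
      show "M \<subseteq> maxR A R \<union> maxR B R" unfolding M_def maxR_def by auto
      show "maxR A R \<union> maxR B R \<subseteq> M"
      proof
        fix a assume "a \<in> maxR A R \<union> maxR B R"
        then have "a \<in> A \<union> B" "(a, x) \<in> R" using xmA xmB unfolding maxR_def by auto
        then show "a \<in> M" using xM trR unfolding M_def maxR_def trans_def by blast
      qed
    qed
    have finM: "finite M" using AB assms(1) unfolding M_def menu_def maxR_def by (auto intro: finite_subset)
    show ?thesis
    proof (cases "card M = 1")
      case True then show ?thesis using memc[OF AB] xM M_def by auto
    next
      case False
      have "\<not> (\<forall>y\<in>M. (y, x) \<in> L)"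
      proof
        assume allM: "\<forall>y\<in>M. (y, x) \<in> L"
        have "card (maxR A R) \<noteq> 1 \<or> card (maxR B R) \<noteq> 1"
        proof (rule ccontr)
          assume "\<not> ?thesis"
          then have "maxR A R = {x}" "maxR B R = {x}" using xmA xmB by (auto simp: card_Suc_eq)
          then have "M = {x}" using MA by auto
          then show False using False by simp
        qed
        then show False using memc[OF A] memc[OF B] xA xB allM MA by auto
      qed
      then show ?thesis using memc[OF AB] xM M_def False by auto
    qed
  qed
  have n: "x \<in> c {x, z}" if xX: "x \<in> X" and yX: "y \<in> X" and zX: "z \<in> X"
      and xy: "x \<in> c {x, y}" and yz: "y \<in> c {y, z}" for x y z
  proof -
    have m: "\<And>a b. a \<in> X \<Longrightarrow> b \<in> X \<Longrightarrow> menu X {a, b}" unfolding menu_def by auto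
    have mxy: "x \<in> maxR {x,y} R" using memc[OF m[OF xX yX]] xy by auto
    have myz: "y \<in> maxR {y,z} R" using memc[OF m[OF yX zX]] yz by auto
    have Rxy: "(x,y) \<in> R" and Ryz: "(y,z) \<in> R" using mxy myz unfolding maxR_def by auto
    have Rxz: "(x,z) \<in> R" using Rxy Ryz trR unfolding trans_def by blast
    have Rxx: "(x,x) \<in> R" using totR[OF xX xX] by auto
    show ?thesis
    proof (cases "x = y \<or> y = z \<or> x = z")
      case True
      moreover have "x = z \<Longrightarrow> ?thesis"
      proof -
        assume "x = z"
        then have "maxR {x, z} R = {x}" using Rxx unfolding maxR_def by auto
        then show ?thesis using memc[OF m[OF xX zX]] by auto
      qed
      ultimately show ?thesis using xy yz by auto
    next
      case False
      then have d: "x \<noteq> y" "y \<noteq> z" "x \<noteq> z" by auto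
      show ?thesis
      proof (cases "(z,x) \<in> R")
        case False
        then have "maxR {x, z} R = {x}" using Rxx Rxz unfolding maxR_def by auto
        then show ?thesis using memc[OF m[OF xX zX]] by auto
      next
        case True
        have Ryx: "(y,x) \<in> R" using True Ryz trR unfolding trans_def by blast
        have Rzy: "(z,y) \<in> R" using True Rxy trR unfolding trans_def by blast
        have Ryy: "(y,y) \<in> R" "(z,z) \<in> R" using totR[OF yX yX] totR[OF zX zX] by auto
        have M1: "maxR {x, y} R = {x, y}" using Rxx Rxy Ryx Ryy unfolding maxR_def by auto
        have M2: "maxR {y, z} R = {y, z}" using Ryz Rzy Ryy unfolding maxR_def by auto
        have M3: "maxR {x, z} R = {x, z}" using Rxx Rxz True Ryy unfolding maxR_def by auto
        have Lxx: "(x,x) \<in> L" "(y,y) \<in> L" using totL[OF xX xX] totL[OF yX yX] by auto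
        have "(y,x) \<notin> L" using memc[OF m[OF xX yX]] xy M1 d Lxx by auto
        then have Lxy: "(x,y) \<in> L" using totL[OF xX yX] by auto
        have "(z,y) \<notin> L" using memc[OF m[OF yX zX]] yz M2 d Lxx by auto
        then have Lyz: "(y,z) \<in> L" using totL[OF yX zX] by auto
        have Lxz: "(x,z) \<in> L" using Lxy Lyz trL unfolding trans_def by blast
        have "(z,x) \<notin> L" using Lxz asL d unfolding antisym_def by blast
        then show ?thesis using memc[OF m[OF xX zX]] M3 d by auto
      qed
    qed
  qed
  show ?thesis using g n by blast
qed

end
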